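(* Let $V$ be the abelian group (written additively) with generators $u_{a,b}$ for real numbers $0<b<a\le1$, subject to the relations: (1) $u_{a+a',b}=u_{a,b}+u_{a',b}$ whenever $0<b<\min(a,a')$ and $a+a'\le1$; (2) $u_{a,b+b'}=u_{a,b}+u_{a,b'}$ whenever $0<\min(b,b')$ and $b+b'<a\le1$; (3) $2u_{a,b}+u_{2b,a}=0$ whenever $0<b<a<2b\le1$. Then the assignment $u_{a,b}\mapsto a\wedge b$ induces a group isomorphism $V\to\bigwedge^2_{\mathbb{Q}}\mathbb{R}$.
   Context: $\bigwedge^2_{\mathbb{Q}}\mathbb{R}$ is the second exterior power of $\mathbb{R}$ viewed as a $\mathbb{Q}$-vector space. *)

theory Defs
  imports "HOL-Algebra.Free_Abelian_Groups" Complex_Main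
begin

definition presented_ab_group :: "'a set \<Rightarrow> ('a \<Rightarrow>\<^sub>0 int) set \<Rightarrow> ('a \<Rightarrow>\<^sub>0 int) set monoid" where
  "presented_ab_group S R = free_Abelian_group S Mod generate (free_Abelian_group S) R"

definition pclass :: "'a set \<Rightarrow> ('a \<Rightarrow>\<^sub>0 int) set \<Rightarrow> ('a \<Rightarrow>\<^sub>0 int) \<Rightarrow> ('a \<Rightarrow>\<^sub>0 int) set" where
  "pclass S R x = r_coset (free_Abelian_group S) (generate (free_Abelian_group S) R) x"

definition V_gens :: "(real \<times> real) set" where
  "V_gens = {(a, b). 0 < b \<and> b < a \<and> a \<le> 1}"

definition V_rels :: "(real \<times> real \<Rightarrow>\<^sub>0 int) set" where
  "V_rels =
     {frag_of (a + a', b) - frag_of (a, b) - frag_of (a', b) | a a' b.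
        0 < b \<and> b < min a a' \<and> a + a' \<le> 1}
   \<union> {frag_of (a, b + b') - frag_of (a, b) - frag_of (a, b') | a b b'.
        0 < min b b' \<and> b + b' < a \<and> a \<le> 1}
   \<union> {frag_cmul 2 (frag_of (a, b)) + frag_of (2 * b, a) | a b.
        0 < b \<and> b < a \<and> a < 2 * b \<and> 2 * b \<le> 1}"

definition V_group :: "(real \<times> real \<Rightarrow>\<^sub>0 int) set monoid" where
  "V_group = presented_ab_group V_gens V_rels"

(* The second exterior power of R over Q, as an abelian group: generated by symbols x \<wedge> y
   (x, y real) subject to Q-bilinearity and alternation. *)
definition wedge_rels :: "(real \<times> real \<Rightarrow>\<^sub>0 int) set" where
  "wedge_rels =
     {frag_of (x + x', y) - frag_of (x, y) - frag_of (x', y) | x x' y. True}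
   \<union> {frag_of (x, y + y') - frag_of (x, y) - frag_of (x, y') | x y y'. True}
   \<union> {frag_cmul (int n) (frag_of (of_rat (of_int m / of_nat n) * x, y)) - frag_cmul m (frag_of (x, y))
        | m n x y. n \<noteq> 0}
   \<union> {frag_cmul (int n) (frag_of (x, of_rat (of_int m / of_nat n) * y)) - frag_cmul m (frag_of (x, y))
        | m n x y. n \<noteq> 0}
   \<union> {frag_of (x, x) | x. True}"

definition Wedge2_QR :: "(real \<times> real \<Rightarrow>\<^sub>0 int) set monoid" where
  "Wedge2_QR = presented_ab_group UNIV wedge_rels"

definition wedge :: "real \<Rightarrow> real \<Rightarrow> (real \<times> real \<Rightarrow>\<^sub>0 int) set" where
  "wedge x y = pclass UNIV wedge_rels (frag_of (x, y))"

definition u_gen :: "real \<Rightarrow> real \<Rightarrow> (real \<times> real \<Rightarrow>\<^sub>0 int) set" where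
  "u_gen a b = pclass V_gens V_rels (frag_of (a, b))"

end

theory Submission
  imports Defs "HOL-Library.Function_Algebras"
begin


primrec nm :: "nat \<Rightarrow> 'a::ab_group_add \<Rightarrow> 'a" where
  "nm 0 x = 0" | "nm (Suc n) x = x + nm n x"

lemma nm_add: "nm n (x + y) = nm n x + nm n y"
  by (induct n) (simp_all add: algebra_simps)

lemma nm_zero [simp]: "nm n 0 = 0"
  by (induct n) simp_all

lemma nm_plus: "nm (a + b) x = nm a x + nm b x"
  by (induct a) (simp_all add: algebra_simps)

lemma nm_mult: "nm (m * n) x = nm m (nm n x)"
  by (induct m) (simp_all add: nm_plus)

definition addf :: "(real \<Rightarrow> 'a::ab_group_add) \<Rightarrow> bool" where
  "addf F \<longleftrightarrow> (\<forall>x y. F (x + y) = F x + F y)"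

lemma addf_add: "addf F \<Longrightarrow> addf G \<Longrightarrow> addf (\<lambda>x. F x + G x)"
  unfolding addf_def by (simp add: algebra_simps)

lemma addf_diff: "addf F \<Longrightarrow> addf G \<Longrightarrow> addf (\<lambda>x. F x - G x)"
  unfolding addf_def by (simp add: algebra_simps)

lemma addf_0: "addf F \<Longrightarrow> F 0 = 0"
  unfolding addf_def by (metis add.right_neutral add_left_imp_eq)

lemma addf_neg: "addf F \<Longrightarrow> F (- x) = - F x"
  using addf_0[of F] unfolding addf_def
  by (metis add.right_inverse add_eq_0_iff)

lemma addf_nm: "addf F \<Longrightarrow> F (real n * x) = nm n (F x)"
proof (induct n)
  case 0 then show ?case by (simp add: addf_0)
next
  case (Suc n)
  have "F (real (Suc n) * x) = F (x + real n * x)" by (simp add: algebra_simps)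
  also have "\<dots> = F x + F (real n * x)" using Suc(2) unfolding addf_def by blast
  finally show ?case using Suc by simp
qed

lemma addf_zero_interval:
  fixes F :: "real \<Rightarrow> 'a::ab_group_add"
  assumes F: "addf F" and pq: "p < q" and Z: "\<And>x. p < x \<Longrightarrow> x < q \<Longrightarrow> F x = 0"
  shows "F y = 0"
proof -
  have pos: "F z = 0" if "0 < z" "z < q - p" for z
  proof -
    define c where "c = p + (q - p - z) / 2"
    have b1: "p < c" "c < q" "p < c + z" "c + z < q" using that by (auto simp: c_def field_simps)
    have "F (c + z) = F c + F z" using F unfolding addf_def by blast
    moreover have "F (c + z) = 0" using b1 by (intro Z) auto
    moreover have "F c = 0" using b1 by (intro Z) auto
    ultimately show ?thesis by simp
  qed
  have small: "F z = 0" if "\<bar>z\<bar> < q - p" for z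
  proof (cases "z > 0")
    case True then show ?thesis using pos that by auto
  next
    case False
    show ?thesis
    proof (cases "z = 0")
      case True then show ?thesis using addf_0[OF F] by simp
    next
      case False
      then have "F (- z) = 0" using pos that \<open>\<not> z > 0\<close> by auto
      then show ?thesis using addf_neg[OF F, of "-z"] by simp
    qed
  qed
  obtain n where n: "\<bar>y\<bar> < real n * (q - p)"
    using reals_Archimedean3[of "q - p"] pq by auto
  then have n0: "n > 0" by (cases "n = 0") auto
  have "y = real n * (y / real n)" using n0 by simp
  then have "F y = nm n (F (y / real n))" using addf_nm[OF F, of n "y / real n"] by simp
  moreover have "\<bar>y / real n\<bar> < q - p"
    using n n0 by (simp add: divide_less_eq abs_divide mult.commute)
  ultimately show ?thesis using small by simp
qed

lemma ext_pos:
  fixes f :: "real \<Rightarrow> 'a::ab_group_add"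
  assumes c: "0 < c"
    and f: "\<And>x y. 0 < x \<Longrightarrow> 0 < y \<Longrightarrow> x + y < c \<Longrightarrow> f (x + y) = f x + f y"
  shows "\<exists>P. (\<forall>x y. 0 < x \<longrightarrow> 0 < y \<longrightarrow> P (x + y) = P x + P y) \<and> (\<forall>x. 0 < x \<and> x < c \<longrightarrow> P x = f x)"
proof -
  have fm: "f (real n * t) = nm n (f t)" if "0 < t" "n \<ge> 1" "real n * t < c" for n t
    using that
  proof (induct n)
    case 0 then show ?case by simp
  next
    case (Suc n)
    show ?case
    proof (cases "n = 0")
      case True then show ?thesis by simp
    next
      case False
      have "real n * t < c" using Suc(4) Suc(2) by (simp add: algebra_simps)
      then have IH: "f (real n * t) = nm n (f t)" using Suc False by simp
      have "f (real (Suc n) * t) = f (real n * t + t)" by (simp add: algebra_simps)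
      also have "\<dots> = f (real n * t) + f t"
        by (rule f) (use Suc False in \<open>auto simp: algebra_simps\<close>)
      finally show ?thesis using IH by (simp add: algebra_simps)
    qed
  qed
  have wd: "nm n (f (x / real n)) = nm m (f (x / real m))"
    if "0 < x" "n \<ge> 1" "m \<ge> 1" "x / real n < c" "x / real m < c" for x n m
  proof -
    define t where "t = x / (real n * real m)"
    have t0: "0 < t" using that by (simp add: t_def)
    have "x / real n = real m * t" using that by (simp add: t_def)
    then have 1: "f (x / real n) = nm m (f t)" using fm[of t m] that t0 by simp
    have "x / real m = real n * t" using that by (simp add: t_def)
    then have 2: "f (x / real m) = nm n (f t)" using fm[of t n] that t0 by simp
    show ?thesis using 1 2 by (simp add: nm_mult[symmetric] mult.commute)
  qed
  define N where "N x = nat \<lfloor>x / c\<rfloor> + 1" for x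
  define P where "P x = nm (N x) (f (x / real (N x)))" for x
  have N1: "N x \<ge> 1" for x by (simp add: N_def)
  have Nc: "x / real (N x) < c" if "0 < x" for x
  proof -
    have "x / c \<ge> 0" using that c by simp
    then have "real (nat \<lfloor>x / c\<rfloor>) = of_int \<lfloor>x / c\<rfloor>" by simp
    moreover have "x / c < of_int \<lfloor>x / c\<rfloor> + 1" using floor_correct[of "x / c"] by simp
    ultimately have "x / c < real (N x)" unfolding N_def of_nat_add of_nat_1 by linarith
    then show ?thesis using c N1[of x] by (simp add: divide_less_eq mult.commute)
  qed
  have PN: "P x = nm n (f (x / real n))" if "0 < x" "n \<ge> 1" "x / real n < c" for x n
    unfolding P_def using wd[of x "N x" n] that N1 Nc by simp
  show ?thesis
  proof (intro exI conjI allI impI)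
    fix x y :: real assume xy: "0 < x" "0 < y"
    define n where "n = N (x + y)"
    have n1: "n \<ge> 1" and nc: "(x + y) / real n < c" using N1 Nc xy by (auto simp: n_def)
    have xc: "x / real n < c" using nc xy n1
      by (smt (verit) divide_right_mono of_nat_0_le_iff)
    have yc: "y / real n < c" using nc xy n1
      by (smt (verit) divide_right_mono of_nat_0_le_iff)
    have "P (x + y) = nm n (f ((x + y) / real n))" using PN[of "x+y" n] xy n1 nc by simp
    also have "(x + y) / real n = x / real n + y / real n" by (simp add: add_divide_distrib)
    also have "f (x / real n + y / real n) = f (x / real n) + f (y / real n)"
      by (rule f) (use xy n1 nc in \<open>auto simp: add_divide_distrib[symmetric]\<close>)
    finally show "P (x + y) = P x + P y"
      using PN[of x n] PN[of y n] xy n1 xc yc by (simp add: nm_add)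
  next
    fix x :: real assume "0 < x \<and> x < c"
    then show "P x = f x" using PN[of x 1] by simp
  qed
qed

lemma ext_all:
  fixes P :: "real \<Rightarrow> 'a::ab_group_add"
  assumes P: "\<And>x y. 0 < x \<Longrightarrow> 0 < y \<Longrightarrow> P (x + y) = P x + P y"
  shows "\<exists>F. addf F \<and> (\<forall>x. 0 < x \<longrightarrow> F x = P x)"
proof -
  define F where "F x = P (x + (\<bar>x\<bar> + 1)) - P (\<bar>x\<bar> + 1)" for x
  have FM: "F x = P (x + M) - P M" if "0 < M" "0 < x + M" for x M
  proof -
    have "P ((x + (\<bar>x\<bar> + 1)) + M) = P (x + (\<bar>x\<bar> + 1)) + P M" using that by (intro P) auto
    moreover have "P ((x + M) + (\<bar>x\<bar> + 1)) = P (x + M) + P (\<bar>x\<bar> + 1)" using that by (intro P) auto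
    moreover have "(x + (\<bar>x\<bar> + 1)) + M = (x + M) + (\<bar>x\<bar> + 1)" by simp
    ultimately show ?thesis unfolding F_def by (simp add: algebra_simps)
  qed
  show ?thesis
  proof (intro exI conjI allI impI)
    show "addf F" unfolding addf_def
    proof (intro allI)
      fix x y :: real
      define M where "M = \<bar>x\<bar> + \<bar>y\<bar> + 1"
      have 1: "F x = P (x + M) - P M" by (rule FM) (auto simp: M_def)
      have 2: "F y = P (y + M) - P M" by (rule FM) (auto simp: M_def)
      have 3: "F (x + y) = P (x + y + (M + M)) - P (M + M)" by (rule FM) (auto simp: M_def)
      have 4: "P (x + y + (M + M)) = P (x + M) + P (y + M)"
        using P[of "x + M" "y + M"] by (auto simp: M_def algebra_simps)
      have 5: "P (M + M) = P M + P M" using P[of M M] by (auto simp: M_def)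
      have "F (x + y) = (P (x + M) + P (y + M)) - (P M + P M)" unfolding 3 4 5 ..
      also have "\<dots> = F x + F y" unfolding 1 2 by (simp add: algebra_simps)
      finally show "F (x + y) = F x + F y" .
    qed
  next
    fix x :: real assume "0 < x"
    then have "F x = P (x + 1) - P 1" by (intro FM) auto
    also have "P (x + 1) = P x + P 1" using \<open>0 < x\<close> by (intro P) auto
    finally show "F x = P x" by simp
  qed
qed

lemma ext_interval:
  fixes f :: "real \<Rightarrow> 'a::ab_group_add"
  assumes c: "0 < c"
    and f: "\<And>x y. 0 < x \<Longrightarrow> 0 < y \<Longrightarrow> x + y < c \<Longrightarrow> f (x + y) = f x + f y"
  shows "\<exists>F. addf F \<and> (\<forall>x. 0 < x \<and> x < c \<longrightarrow> F x = f x)"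
proof -
  obtain P where P: "\<forall>x y. 0 < x \<longrightarrow> 0 < y \<longrightarrow> P (x + y) = P x + P y"
    and Pf: "\<forall>x. 0 < x \<and> x < c \<longrightarrow> P x = f x"
    using ext_pos[OF c f] by blast
  obtain F where "addf F" "\<forall>x. 0 < x \<longrightarrow> F x = P x" using ext_all[of P] P by blast
  then show ?thesis using Pf by auto
qed

lemma biadd_zero:
  fixes B :: "real \<Rightarrow> real \<Rightarrow> 'a::ab_group_add"
  assumes B1: "\<And>y. addf (\<lambda>x. B x y)" and B2: "\<And>x. addf (B x)"
    and Z: "\<And>a b. 0 < b \<Longrightarrow> b < a \<Longrightarrow> a < 1 \<Longrightarrow> B a b = 0"
  shows "B x y = 0"
proof -
  have H: "B a y = 0" if "0 < a" "a < 1" for a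
    by (rule addf_zero_interval[OF B2, of 0 a]) (use that Z in auto)
  show ?thesis by (rule addf_zero_interval[OF B1, of 0 1]) (simp_all add: H)
qed

lemma core_extension:
  fixes u :: "real \<Rightarrow> real \<Rightarrow> 'g::ab_group_add"
  assumes r1: "\<And>a a' b. 0 < b \<Longrightarrow> b < min a a' \<Longrightarrow> a + a' \<le> 1 \<Longrightarrow> u (a + a') b = u a b + u a' b"
    and r2: "\<And>a b b'. 0 < min b b' \<Longrightarrow> b + b' < a \<Longrightarrow> a \<le> 1 \<Longrightarrow> u a (b + b') = u a b + u a b'"
    and r3: "\<And>a b. 0 < b \<Longrightarrow> b < a \<Longrightarrow> a < 2 * b \<Longrightarrow> 2 * b \<le> 1 \<Longrightarrow> u a b + u a b + u (2 * b) a = 0"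
  shows "\<exists>W. (\<forall>y. addf (\<lambda>x. W x y)) \<and> (\<forall>x. addf (W x)) \<and> (\<forall>x. W x x = 0) \<and>
             (\<forall>a b. 0 < b \<and> b < a \<and> a \<le> 1 \<longrightarrow> W a b = u a b)"
proof -
  define g where "g a = (SOME F. addf F \<and> (\<forall>b. 0 < b \<and> b < a \<longrightarrow> F b = u a b))" for a
  have g: "addf (g a) \<and> (\<forall>b. 0 < b \<and> b < a \<longrightarrow> g a b = u a b)" if "0 < a" "a \<le> 1" for a
  proof -
    have "\<exists>F. addf F \<and> (\<forall>b. 0 < b \<and> b < a \<longrightarrow> F b = u a b)"
      by (rule ext_interval) (use that in \<open>auto intro: r2\<close>)
    then show ?thesis unfolding g_def by (rule someI_ex)
  qed
  have S2: "g (a + a') = g a + g a'" if "0 < a" "0 < a'" "a + a' \<le> 1" for a a'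
  proof
    fix b
    have "g (a + a') b - g a b - g a' b = 0"
    proof (rule addf_zero_interval[of _ 0 "min a a'"])
      show "addf (\<lambda>b. g (a + a') b - g a b - g a' b)"
        using g[of a] g[of a'] g[of "a + a'"] that by (intro addf_diff) auto
      show "0 < min a a'" using that by simp
      fix x assume "0 < x" "x < min a a'"
      then have "g (a + a') x = u (a + a') x" "g a x = u a x" "g a' x = u a' x"
        using g[of a] g[of a'] g[of "a + a'"] that by auto
      moreover have "u (a + a') x = u a x + u a' x" using r1[of x a a'] that \<open>0 < x\<close> \<open>x < min a a'\<close> by simp
      ultimately show "g (a + a') x - g a x - g a' x = 0" by simp
    qed
    then show "g (a + a') b = (g a + g a') b" by (simp add: diff_eq_eq add.commute)
  qed
  obtain G where G: "addf G" and Gg: "\<forall>x. 0 < x \<and> x < 1 \<longrightarrow> G x = g x"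
  proof -
    have "\<exists>F. addf F \<and> (\<forall>x. 0 < x \<and> x < 1 \<longrightarrow> F x = g x)"
      by (rule ext_interval) (use S2 in auto)
    then show ?thesis using that by blast
  qed
  define W where "W x y = G x y" for x y
  have W1: "addf (\<lambda>x. W x y)" for y
    using G unfolding addf_def W_def by simp
  have W2: "addf (W x)" for x
  proof -
    have "W x (y + y') - W x y - W x y' = 0" for y y'
    proof (rule addf_zero_interval[of "\<lambda>x. W x (y + y') - W x y - W x y'" 0 1])
      show "addf (\<lambda>x. W x (y + y') - W x y - W x y')"
        using W1 by (intro addf_diff) auto
      fix a :: real assume "0 < a" "a < 1"
      then have Ga: "G a = g a" using Gg by blast
      have "addf (g a)" using g[of a] \<open>0 < a\<close> \<open>a < 1\<close> by simp
      then have "g a (y + y') = g a y + g a y'" unfolding addf_def by blast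
      then show "W a (y + y') - W a y - W a y' = 0"
        unfolding W_def Ga by simp
    qed simp
    then show ?thesis unfolding addf_def by (simp add: diff_eq_eq add.commute)
  qed
  have Wu: "W a b = u a b" if "0 < b" "b < a" "a \<le> 1" for a b
  proof (cases "a < 1")
    case True
    then have Ga: "G a = g a" using Gg that by auto
    show ?thesis unfolding W_def Ga using g[of a] that by auto
  next
    case False
    then have a1: "a = 1" using that by simp
    have "G (1/2 + 1/2) = G (1/2) + G (1/2)" using G unfolding addf_def by blast
    then have "G 1 = G (1/2) + G (1/2)" by simp
    also have "\<dots> = g (1/2) + g (1/2)" using Gg by simp
    also have "\<dots> = g 1" using S2[of "1/2" "1/2"] by simp
    finally show ?thesis using g[of 1] that a1 unfolding W_def by auto
  qed
  define T where "T x y = W x y + W x y + W y x + W y x" for x y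
  have T1: "addf (\<lambda>x. T x y)" for y
    unfolding T_def using W1 W2 by (intro addf_add) auto
  have T2: "addf (T x)" for x
    unfolding T_def using W1 W2 by (intro addf_add) auto
  have T0: "T x y = 0" for x y
  proof (rule addf_zero_interval[OF T1, of 0 "1/2"])
    fix a :: real assume a: "0 < a" "a < 1/2"
    show "T a y = 0"
    proof (rule addf_zero_interval[OF T2, of "a/2" a])
      fix b :: real assume b: "a/2 < b" "b < a"
      have "W (b + b) a = W b a + W b a" using W1[of a] unfolding addf_def by blast
      then have "W (2 * b) a = W b a + W b a" by (metis mult_2)
      then have "u (2 * b) a = W b a + W b a" using Wu[of a "2*b"] a b by simp
      moreover have "u a b = W a b" using Wu[of b a] a b by simp
      moreover have "u a b + u a b + u (2 * b) a = 0" using r3[of b a] a b by simp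
      ultimately show "T a b = 0" unfolding T_def by (simp add: algebra_simps)
    qed (use a in simp)
  qed simp
  have Wd: "W x x = 0" for x
  proof -
    define h where "h = x / 2"
    have hx: "h + h = x" by (simp add: h_def)
    have e1: "W (h + h) (h + h) = W h (h + h) + W h (h + h)" using W1[of "h + h"] unfolding addf_def by blast
    have e2: "W h (h + h) = W h h + W h h" using W2[of h] unfolding addf_def by blast
    have "W x x = T h h" using e1 e2 unfolding hx T_def by (simp add: algebra_simps)
    then show ?thesis using T0 by simp
  qed
  show ?thesis
    apply (rule exI[of _ W])
    using W1 W2 Wd Wu by simp
qed



section \<open>Generic facts about presented abelian groups\<close>

lemma pres_subgroup:
  assumes "R \<subseteq> carrier (free_Abelian_group S)"
  shows "subgroup (generate (free_Abelian_group S) R) (free_Abelian_group S)"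
  using group.generate_is_subgroup[OF group_free_Abelian_group assms] .

lemma pres_comm_group:
  assumes "R \<subseteq> carrier (free_Abelian_group S)"
  shows "comm_group (presented_ab_group S R)"
  unfolding presented_ab_group_def
  using comm_group.abelian_FactGroup[OF abelian_free_Abelian_group pres_subgroup[OF assms]] .

lemma pres_normal:
  assumes "R \<subseteq> carrier (free_Abelian_group S)"
  shows "generate (free_Abelian_group S) R \<lhd> free_Abelian_group S"
  using comm_group.subgroup_imp_normal[OF abelian_free_Abelian_group pres_subgroup[OF assms]] .

lemma pres_carrier:
  "carrier (presented_ab_group S R) = pclass S R ` carrier (free_Abelian_group S)"
  unfolding presented_ab_group_def pclass_def by (rule carrier_FactGroup)

lemma pres_pclass_in:
  "Poly_Mapping.keys x \<subseteq> S \<Longrightarrow> pclass S R x \<in> carrier (presented_ab_group S R)"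
  unfolding pres_carrier by auto

lemma pres_mult:
  assumes "R \<subseteq> carrier (free_Abelian_group S)" "Poly_Mapping.keys x \<subseteq> S" "Poly_Mapping.keys y \<subseteq> S"
  shows "pclass S R x \<otimes>\<^bsub>presented_ab_group S R\<^esub> pclass S R y = pclass S R (x + y)"
  unfolding presented_ab_group_def pclass_def mult_FactGroup
  using normal.rcos_sum[OF pres_normal[OF assms(1)], of x y] assms(2,3) by simp

lemma pres_one:
  "\<one>\<^bsub>presented_ab_group S R\<^esub> = generate (free_Abelian_group S) R"
  unfolding presented_ab_group_def by simp

lemma pres_eq_one_iff:
  assumes "R \<subseteq> carrier (free_Abelian_group S)" "Poly_Mapping.keys x \<subseteq> S"
  shows "pclass S R x = \<one>\<^bsub>presented_ab_group S R\<^esub> \<longleftrightarrow> x \<in> generate (free_Abelian_group S) R"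
proof
  assume "pclass S R x = \<one>\<^bsub>presented_ab_group S R\<^esub>"
  then have "generate (free_Abelian_group S) R #>\<^bsub>free_Abelian_group S\<^esub> x = generate (free_Abelian_group S) R"
    unfolding pres_one pclass_def .
  moreover have "x \<in> generate (free_Abelian_group S) R #>\<^bsub>free_Abelian_group S\<^esub> x"
    using group.rcos_self[OF group_free_Abelian_group _ pres_subgroup[OF assms(1)]] assms(2) by simp
  ultimately show "x \<in> generate (free_Abelian_group S) R" by simp
next
  assume "x \<in> generate (free_Abelian_group S) R"
  then show "pclass S R x = \<one>\<^bsub>presented_ab_group S R\<^esub>"
    unfolding pres_one pclass_def
    using subgroup.rcos_const[OF pres_subgroup[OF assms(1)] group_free_Abelian_group] by blast
qed



lemma keys_closed:
  "Poly_Mapping.keys a \<subseteq> S \<Longrightarrow> Poly_Mapping.keys b \<subseteq> S \<Longrightarrow> Poly_Mapping.keys (a + b) \<subseteq> S"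
  "Poly_Mapping.keys a \<subseteq> S \<Longrightarrow> Poly_Mapping.keys b \<subseteq> S \<Longrightarrow> Poly_Mapping.keys (a - b) \<subseteq> S"
  "Poly_Mapping.keys a \<subseteq> S \<Longrightarrow> Poly_Mapping.keys (- a) \<subseteq> S"
  "Poly_Mapping.keys a \<subseteq> S \<Longrightarrow> Poly_Mapping.keys (frag_cmul k a) \<subseteq> S"
  "p \<in> S \<Longrightarrow> Poly_Mapping.keys (frag_of p) \<subseteq> S"
  using keys_add[of a b] keys_diff[of a b] keys_cmul[of k a] by auto

lemma keys3: "Poly_Mapping.keys (frag_of x - frag_of y - frag_of z) \<subseteq> {x, y, z}"
  using keys_diff[of "frag_of x - frag_of y" "frag_of z"] keys_diff[of "frag_of x" "frag_of y"] by auto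

lemma keys2: "Poly_Mapping.keys (frag_cmul k (frag_of x) + frag_of y) \<subseteq> {x, y}"
  using keys_add[of "frag_cmul k (frag_of x)" "frag_of y"] keys_cmul[of k "frag_of x"] by auto

lemma V_rels_sub: "V_rels \<subseteq> carrier (free_Abelian_group V_gens)"
proof -
  have A: "{x, y, z} \<subseteq> V_gens \<Longrightarrow> Poly_Mapping.keys (frag_of x - frag_of y - frag_of z) \<subseteq> V_gens" for x y z
    using keys3[of x y z] by blast
  have B: "{x, y} \<subseteq> V_gens \<Longrightarrow> Poly_Mapping.keys (frag_cmul k (frag_of x) + frag_of y) \<subseteq> V_gens" for k x y
    using keys2[of k x y] by blast
  show ?thesis
  proof
    fix r assume "r \<in> V_rels"
    then consider
      (1) a a' b where "r = frag_of (a + a', b) - frag_of (a, b) - frag_of (a', b)" "0 < b" "b < min a a'" "a + a' \<le> 1"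
    | (2) a b b' where "r = frag_of (a, b + b') - frag_of (a, b) - frag_of (a, b')" "0 < min b b'" "b + b' < a" "a \<le> 1"
    | (3) a b where "r = frag_cmul 2 (frag_of (a, b)) + frag_of (2 * b, a)" "0 < b" "b < a" "a < 2 * b" "2 * b \<le> 1"
      unfolding V_rels_def by blast
    then show "r \<in> carrier (free_Abelian_group V_gens)"
    proof cases
      case 1 then show ?thesis unfolding carrier_free_Abelian_group_iff 1(1) by (intro A) (auto simp: V_gens_def)
    next
      case 2 then show ?thesis unfolding carrier_free_Abelian_group_iff 2(1) by (intro A) (auto simp: V_gens_def)
    next
      case 3 then show ?thesis unfolding carrier_free_Abelian_group_iff 3(1) by (intro B) (auto simp: V_gens_def)
    qed
  qed
qed

lemma wedge_rels_sub: "wedge_rels \<subseteq> carrier (free_Abelian_group UNIV)"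
  unfolding subset_eq by simp

lemma V_comm: "comm_group V_group"
  unfolding V_group_def by (rule pres_comm_group[OF V_rels_sub])

lemma W_comm: "comm_group Wedge2_QR"
  unfolding Wedge2_QR_def by (rule pres_comm_group[OF wedge_rels_sub])

lemma V_one: "\<one>\<^bsub>V_group\<^esub> \<in> carrier V_group"
proof -
  interpret G: comm_group V_group by (rule V_comm)
  show ?thesis by simp
qed

lemma W_one: "\<one>\<^bsub>Wedge2_QR\<^esub> \<in> carrier Wedge2_QR"
proof -
  interpret G: comm_group Wedge2_QR by (rule W_comm)
  show ?thesis by simp
qed

typedef vt = "carrier V_group" morphisms Rv Av
  using V_one by blast

typedef wt = "carrier Wedge2_QR" morphisms Rw Aw
  using W_one by blast

instantiation vt :: ab_group_add
begin
definition zero_vt_def: "0 = Av \<one>\<^bsub>V_group\<^esub>"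
definition plus_vt_def: "x + y = Av (Rv x \<otimes>\<^bsub>V_group\<^esub> Rv y)"
definition uminus_vt_def: "- x = Av (inv\<^bsub>V_group\<^esub> (Rv x))"
definition minus_vt_def: "x - y = x + - (y :: vt)"
instance
proof
  interpret G: comm_group V_group by (rule V_comm)
  have R: "Rv x \<in> carrier V_group" for x using Rv by blast
  fix a b c :: vt
  show "a + b + c = a + (b + c)"
    unfolding plus_vt_def using R by (simp add: Av_inverse G.m_assoc)
  show "a + b = b + a"
    unfolding plus_vt_def using R by (simp add: G.m_comm)
  show "0 + a = a"
    unfolding plus_vt_def zero_vt_def using R by (simp add: Av_inverse Rv_inverse)
  show "- a + a = 0"
    unfolding plus_vt_def zero_vt_def uminus_vt_def using R by (simp add: Av_inverse)
  show "a - b = a + - b" by (rule minus_vt_def)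
qed
end

instantiation wt :: ab_group_add
begin
definition zero_wt_def: "0 = Aw \<one>\<^bsub>Wedge2_QR\<^esub>"
definition plus_wt_def: "x + y = Aw (Rw x \<otimes>\<^bsub>Wedge2_QR\<^esub> Rw y)"
definition uminus_wt_def: "- x = Aw (inv\<^bsub>Wedge2_QR\<^esub> (Rw x))"
definition minus_wt_def: "x - y = x + - (y :: wt)"
instance
proof
  interpret G: comm_group Wedge2_QR by (rule W_comm)
  have R: "Rw x \<in> carrier Wedge2_QR" for x using Rw by blast
  fix a b c :: wt
  show "a + b + c = a + (b + c)"
    unfolding plus_wt_def using R by (simp add: Aw_inverse G.m_assoc)
  show "a + b = b + a"
    unfolding plus_wt_def using R by (simp add: G.m_comm)
  show "0 + a = a"
    unfolding plus_wt_def zero_wt_def using R by (simp add: Aw_inverse Rw_inverse)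
  show "- a + a = 0"
    unfolding plus_wt_def zero_wt_def uminus_wt_def using R by (simp add: Aw_inverse)
  show "a - b = a + - b" by (rule minus_wt_def)
qed
end

definition FV where "FV = free_Abelian_group V_gens"
definition HV where "HV = generate FV V_rels"
definition HW where "HW = generate (free_Abelian_group (UNIV :: (real \<times> real) set)) wedge_rels"

definition pV :: "(real \<times> real \<Rightarrow>\<^sub>0 int) \<Rightarrow> vt" where
  "pV z = Av (pclass V_gens V_rels z)"
definition pW :: "(real \<times> real \<Rightarrow>\<^sub>0 int) \<Rightarrow> wt" where
  "pW z = Aw (pclass UNIV wedge_rels z)"

lemma pV_in: "Poly_Mapping.keys z \<subseteq> V_gens \<Longrightarrow> pclass V_gens V_rels z \<in> carrier V_group"
  unfolding V_group_def by (rule pres_pclass_in)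

lemma pW_in: "pclass UNIV wedge_rels z \<in> carrier Wedge2_QR"
  unfolding Wedge2_QR_def by (rule pres_pclass_in) simp

lemma pV_add:
  assumes "Poly_Mapping.keys x \<subseteq> V_gens" "Poly_Mapping.keys y \<subseteq> V_gens"
  shows "pV (x + y) = pV x + pV y"
  unfolding pV_def plus_vt_def using assms pV_in
  by (simp add: Av_inverse V_group_def pres_mult[OF V_rels_sub])

lemma pW_add: "pW (x + y) = pW x + pW y"
  unfolding pW_def plus_wt_def using pW_in
  by (simp add: Aw_inverse Wedge2_QR_def pres_mult[OF wedge_rels_sub])

lemma pV_zero_iff:
  assumes "Poly_Mapping.keys x \<subseteq> V_gens"
  shows "pV x = 0 \<longleftrightarrow> x \<in> HV"
proof -
  have "pV x = 0 \<longleftrightarrow> pclass V_gens V_rels x = \<one>\<^bsub>V_group\<^esub>"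
    unfolding pV_def zero_vt_def using pV_in[OF assms] V_one
    by (simp add: Av_inject)
  also have "\<dots> \<longleftrightarrow> x \<in> HV"
    unfolding V_group_def HV_def FV_def using pres_eq_one_iff[OF V_rels_sub assms] .
  finally show ?thesis .
qed

lemma pW_zero_iff: "pW x = 0 \<longleftrightarrow> x \<in> HW"
proof -
  have "pW x = 0 \<longleftrightarrow> pclass UNIV wedge_rels x = \<one>\<^bsub>Wedge2_QR\<^esub>"
    unfolding pW_def zero_wt_def using pW_in W_one
    by (simp add: Aw_inject)
  also have "\<dots> \<longleftrightarrow> x \<in> HW"
    unfolding Wedge2_QR_def HW_def using pres_eq_one_iff[OF wedge_rels_sub] by simp
  finally show ?thesis .
qed

lemma pV_surj: "\<exists>z. Poly_Mapping.keys z \<subseteq> V_gens \<and> v = pV z"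
proof -
  have "Rv v \<in> carrier V_group" using Rv by blast
  then obtain z where "Poly_Mapping.keys z \<subseteq> V_gens" "Rv v = pclass V_gens V_rels z"
    unfolding V_group_def pres_carrier by auto
  then show ?thesis unfolding pV_def by (metis Rv_inverse)
qed

lemma pW_surj: "\<exists>z. w = pW z"
proof -
  have "Rw w \<in> carrier Wedge2_QR" using Rw by blast
  then obtain z where "Rw w = pclass UNIV wedge_rels z"
    unfolding Wedge2_QR_def pres_carrier by auto
  then show ?thesis unfolding pW_def by (metis Rw_inverse)
qed



definition zm :: "int \<Rightarrow> 'a::ab_group_add \<Rightarrow> 'a" where
  "zm k x = (if 0 \<le> k then nm (nat k) x else - nm (nat (- k)) x)"

lemma zm_0 [simp]: "zm 0 x = 0"
  by (simp add: zm_def)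

lemma zm_succ: "zm (k + 1) x = zm k x + x"
proof (cases "0 \<le> k")
  case True
  then have "nat (k + 1) = Suc (nat k)" by simp
  then show ?thesis using True by (simp add: zm_def add.commute)
next
  case False
  then obtain m where m: "nat (- k) = Suc m" by (metis gr0_implies_Suc zero_less_nat_eq neg_0_less_iff_less not_le)
  have "nat (- (k + 1)) = m" using m by simp
  then have e1: "zm (k + 1) x = - nm m x"
    using False m by (cases "0 \<le> k + 1") (auto simp: zm_def)
  have e2: "zm k x = - (x + nm m x)" using False m by (simp add: zm_def)
  show ?thesis unfolding e1 e2 by (simp add: algebra_simps)
qed

lemma zm_pred: "zm (k - 1) x = zm k x - x"
  using zm_succ[of "k - 1" x] by (simp add: algebra_simps)

lemma additive_frag_cmul:
  fixes \<Psi> :: "('c \<Rightarrow>\<^sub>0 int) \<Rightarrow> 'b::ab_group_add"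
  assumes A: "\<And>x y. \<Psi> (x + y) = \<Psi> x + \<Psi> y"
  shows "\<Psi> (frag_cmul k z) = zm k (\<Psi> z)"
proof -
  interpret additive \<Psi> by unfold_locales (rule A)
  show ?thesis
  proof (induct k rule: int_induct[of _ 0])
    case base then show ?case by (simp add: zero)
  next
    case (step1 i)
    have "frag_cmul (i + 1) z = frag_cmul i z + z" by (simp add: frag_cmul_distrib)
    then show ?case using step1 by (simp add: add zm_succ)
  next
    case (step2 i)
    have "frag_cmul (i - 1) z = frag_cmul i z - z" by (simp add: frag_cmul_diff_distrib)
    then show ?case using step2 by (simp add: diff zm_pred)
  qed
qed

lemma addf_int:
  assumes F: "addf F"
  shows "F (of_int k * x) = zm k (F x)"
proof (induct k rule: int_induct[of _ 0])
  case base then show ?case by (simp add: addf_0[OF F])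
next
  case (step1 i)
  have "F (of_int (i + 1) * x) = F (of_int i * x + x)" by (simp add: algebra_simps)
  also have "\<dots> = F (of_int i * x) + F x" using F unfolding addf_def by blast
  finally show ?case using step1 by (simp add: zm_succ)
next
  case (step2 i)
  have "F (of_int i * x) = F (of_int (i - 1) * x + x)" by (simp add: algebra_simps)
  also have "\<dots> = F (of_int (i - 1) * x) + F x" using F unfolding addf_def by blast
  finally show ?case using step2 by (simp add: zm_pred algebra_simps)
qed

lemma frag_univ:
  fixes f :: "'a \<Rightarrow> 'b::ab_group_add"
  shows "\<exists>\<Psi>. (\<forall>x y. \<Psi> (x + y) = \<Psi> x + \<Psi> y) \<and> (\<forall>k. \<Psi> (frag_of k) = f k)"
proof -
  define G where "G = (\<lparr>carrier = UNIV, monoid.mult = (+), one = 0\<rparr> :: 'b monoid)"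
  have CG: "comm_group G"
    unfolding G_def
    by (rule comm_groupI) (auto simp: algebra_simps intro: exI[of _ "- x" for x])
  obtain h where h: "h \<in> hom (free_Abelian_group UNIV) G" "\<And>x. x \<in> UNIV \<Longrightarrow> h (frag_of x) = f x"
    using comm_group.free_Abelian_group_universal[OF CG, of f UNIV] by (auto simp: G_def)
  have "h (x + y) = h x + h y" for x y
    using hom_mult[OF h(1), of x y] by (simp add: G_def)
  then show ?thesis using h(2) by blast
qed



definition uV :: "real \<Rightarrow> real \<Rightarrow> vt" where
  "uV a b = pV (frag_of (a, b))"

definition wd :: "real \<Rightarrow> real \<Rightarrow> wt" where
  "wd x y = pW (frag_of (x, y))"

lemma pV_zero: "pV 0 = 0"
  using pV_zero_iff[of 0] generate.one[of "FV" V_rels] unfolding HV_def FV_def by simp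

lemma pV_diff:
  assumes "Poly_Mapping.keys x \<subseteq> V_gens" "Poly_Mapping.keys y \<subseteq> V_gens"
  shows "pV (x - y) = pV x - pV y"
proof -
  have "pV x = pV ((x - y) + y)" by simp
  also have "\<dots> = pV (x - y) + pV y" using assms by (intro pV_add keys_closed)
  finally show ?thesis by (simp add: algebra_simps)
qed

lemma pW_additive: "additive pW"
  by unfold_locales (rule pW_add)

lemma in_V_gens: "0 < b \<Longrightarrow> b < a \<Longrightarrow> a \<le> 1 \<Longrightarrow> (a, b) \<in> V_gens"
  by (simp add: V_gens_def)

lemma V_rels_HV: "r \<in> V_rels \<Longrightarrow> pV r = 0"
  using pV_zero_iff V_rels_sub generate.incl[of r V_rels FV] unfolding HV_def FV_def by auto

lemma uV_r1: "0 < b \<Longrightarrow> b < min a a' \<Longrightarrow> a + a' \<le> 1 \<Longrightarrow> uV (a + a') b = uV a b + uV a' b"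
proof -
  assume h: "0 < b" "b < min a a'" "a + a' \<le> 1"
  have "frag_of (a + a', b) - frag_of (a, b) - frag_of (a', b) \<in> V_rels"
    unfolding V_rels_def using h by blast
  then have "pV (frag_of (a + a', b) - frag_of (a, b) - frag_of (a', b)) = 0" by (rule V_rels_HV)
  moreover have "pV (frag_of (a + a', b) - frag_of (a, b) - frag_of (a', b)) = uV (a + a') b - uV a b - uV a' b"
    unfolding uV_def using h
    by (simp add: pV_diff keys_closed V_gens_def)
  ultimately show ?thesis by (simp add: algebra_simps)
qed

lemma uV_r2: "0 < min b b' \<Longrightarrow> b + b' < a \<Longrightarrow> a \<le> 1 \<Longrightarrow> uV a (b + b') = uV a b + uV a b'"
proof -
  assume h: "0 < min b b'" "b + b' < a" "a \<le> 1"
  have "frag_of (a, b + b') - frag_of (a, b) - frag_of (a, b') \<in> V_rels"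
    unfolding V_rels_def using h by blast
  then have "pV (frag_of (a, b + b') - frag_of (a, b) - frag_of (a, b')) = 0" by (rule V_rels_HV)
  moreover have "pV (frag_of (a, b + b') - frag_of (a, b) - frag_of (a, b')) = uV a (b + b') - uV a b - uV a b'"
    unfolding uV_def using h
    by (simp add: pV_diff keys_closed V_gens_def)
  ultimately show ?thesis by (simp add: algebra_simps)
qed

lemma uV_r3: "0 < b \<Longrightarrow> b < a \<Longrightarrow> a < 2 * b \<Longrightarrow> 2 * b \<le> 1 \<Longrightarrow> uV a b + uV a b + uV (2 * b) a = 0"
proof -
  assume h: "0 < b" "b < a" "a < 2 * b" "2 * b \<le> 1"
  have "frag_cmul 2 (frag_of (a, b)) + frag_of (2 * b, a) \<in> V_rels"
    unfolding V_rels_def using h by blast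
  then have "pV (frag_cmul 2 (frag_of (a, b)) + frag_of (2 * b, a)) = 0" by (rule V_rels_HV)
  moreover have "frag_cmul 2 (frag_of (a, b)) = frag_of (a, b) + frag_of (a, b)"
    using frag_cmul_distrib[of 1 1 "frag_of (a, b)"] by simp
  moreover have "pV (frag_of (a, b) + frag_of (a, b) + frag_of (2 * b, a)) = uV a b + uV a b + uV (2 * b) a"
    unfolding uV_def using h
    by (simp add: pV_add keys_closed V_gens_def)
  ultimately show ?thesis by simp
qed

lemma wd_rel: "r \<in> wedge_rels \<Longrightarrow> pW r = 0"
  using pW_zero_iff generate.incl[of r wedge_rels] unfolding HW_def by auto

lemma wd_add1: "wd (x + x') y = wd x y + wd x' y"
proof -
  have "pW (frag_of (x + x', y) - frag_of (x, y) - frag_of (x', y)) = 0"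
    by (rule wd_rel) (unfold wedge_rels_def, blast)
  then show ?thesis unfolding wd_def additive.diff[OF pW_additive] by (simp add: algebra_simps)
qed

lemma wd_add2: "wd x (y + y') = wd x y + wd x y'"
proof -
  have "pW (frag_of (x, y + y') - frag_of (x, y) - frag_of (x, y')) = 0"
    by (rule wd_rel) (unfold wedge_rels_def, blast)
  then show ?thesis unfolding wd_def additive.diff[OF pW_additive] by (simp add: algebra_simps)
qed

lemma wd_alt: "wd x x = 0"
  unfolding wd_def by (rule wd_rel) (unfold wedge_rels_def, blast)

lemma wd_antisym: "wd x y + wd y x = 0"
proof -
  have "wd (x + y) (x + y) = wd x x + wd x y + (wd y x + wd y y)"
    by (simp add: wd_add1 wd_add2)
  then show ?thesis by (simp add: wd_alt)
qed

lemma V_rels_pW: "r \<in> V_rels \<Longrightarrow> pW r = 0"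
proof -
  assume "r \<in> V_rels"
  then consider
      (1) a a' b where "r = frag_of (a + a', b) - frag_of (a, b) - frag_of (a', b)"
    | (2) a b b' where "r = frag_of (a, b + b') - frag_of (a, b) - frag_of (a, b')"
    | (3) a b where "r = frag_cmul 2 (frag_of (a, b)) + frag_of (2 * b, a)"
    unfolding V_rels_def by blast
  then show ?thesis
  proof cases
    case 1 then show ?thesis by (intro wd_rel) (unfold wedge_rels_def, blast)
  next
    case 2 then show ?thesis by (intro wd_rel) (unfold wedge_rels_def, blast)
  next
    case 3
    have "frag_cmul 2 (frag_of (a, b)) = frag_of (a, b) + frag_of (a, b)"
      using frag_cmul_distrib[of 1 1 "frag_of (a, b)"] by simp
    then have "pW r = wd a b + wd a b + wd (2 * b) a"
      unfolding 3 wd_def by (simp add: pW_add)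
    also have "wd (2 * b) a = wd b a + wd b a" using wd_add1[of b b a] by (metis mult_2)
    also have "wd a b + wd a b + (wd b a + wd b a) = (wd a b + wd b a) + (wd a b + wd b a)"
      by (simp add: algebra_simps)
    finally show ?thesis by (simp add: wd_antisym)
  qed
qed

lemma HV_pW: "z \<in> HV \<Longrightarrow> pW z = 0"
  unfolding HV_def
proof (induct z rule: generate.induct)
  case one then show ?case using additive.zero[OF pW_additive] unfolding FV_def by simp
next
  case (incl h) then show ?case by (rule V_rels_pW)
next
  case (inv h)
  then have "h \<in> carrier (free_Abelian_group V_gens)" using V_rels_sub by blast
  then have "Poly_Mapping.keys h \<subseteq> V_gens" by simp
  then have "inv\<^bsub>FV\<^esub> h = - h" unfolding FV_def by simp
  then show ?case using V_rels_pW[OF inv] additive.minus[OF pW_additive] by simp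
next
  case (eng h1 h2) then show ?case by (simp add: FV_def pW_add)
qed



lemma W_exists:
  "\<exists>W. (\<forall>y. addf (\<lambda>x. W x y)) \<and> (\<forall>x. addf (W x)) \<and> (\<forall>x. W x x = 0) \<and>
       (\<forall>a b. 0 < b \<and> b < a \<and> a \<le> 1 \<longrightarrow> W a b = uV a b)"
  by (rule core_extension) (auto intro: uV_r1 uV_r2 uV_r3)

definition WW :: "real \<Rightarrow> real \<Rightarrow> vt" where
  "WW = (SOME W. (\<forall>y. addf (\<lambda>x. W x y)) \<and> (\<forall>x. addf (W x)) \<and> (\<forall>x. W x x = 0) \<and>
       (\<forall>a b. 0 < b \<and> b < a \<and> a \<le> 1 \<longrightarrow> W a b = uV a b))"

lemma WW: "(\<forall>y. addf (\<lambda>x. WW x y)) \<and> (\<forall>x. addf (WW x)) \<and> (\<forall>x. WW x x = 0) \<and>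
       (\<forall>a b. 0 < b \<and> b < a \<and> a \<le> 1 \<longrightarrow> WW a b = uV a b)"
  unfolding WW_def by (rule someI_ex[OF W_exists])

lemma WW1: "WW (x + x') y = WW x y + WW x' y"
  using WW unfolding addf_def by blast
lemma WW2: "WW x (y + y') = WW x y + WW x y'"
  using WW unfolding addf_def by blast
lemma WW_alt: "WW x x = 0"
  using WW by blast
lemma WW_u: "0 < b \<Longrightarrow> b < a \<Longrightarrow> a \<le> 1 \<Longrightarrow> WW a b = uV a b"
  using WW by blast

definition Psi :: "(real \<times> real \<Rightarrow>\<^sub>0 int) \<Rightarrow> vt" where
  "Psi = (SOME P. (\<forall>x y. P (x + y) = P x + P y) \<and> (\<forall>k. P (frag_of k) = (\<lambda>(x, y). WW x y) k))"

lemma Psi: "(\<forall>x y. Psi (x + y) = Psi x + Psi y) \<and> (\<forall>k. Psi (frag_of k) = (\<lambda>(x, y). WW x y) k)"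
  unfolding Psi_def by (rule someI_ex[OF frag_univ])

lemma Psi_add: "Psi (x + y) = Psi x + Psi y"
  using Psi by blast

lemma Psi_of: "Psi (frag_of (x, y)) = WW x y"
  using Psi by auto

lemma Psi_additive: "additive Psi"
  by unfold_locales (rule Psi_add)

lemma Psi_cmul: "Psi (frag_cmul k z) = zm k (Psi z)"
  by (rule additive_frag_cmul) (rule Psi_add)

lemma Psi_rel: "r \<in> wedge_rels \<Longrightarrow> Psi r = 0"
proof -
  assume "r \<in> wedge_rels"
  then consider
      (1) x x' y where "r = frag_of (x + x', y) - frag_of (x, y) - frag_of (x', y)"
    | (2) x y y' where "r = frag_of (x, y + y') - frag_of (x, y) - frag_of (x, y')"
    | (3) m n x y where "r = frag_cmul (int n) (frag_of (of_rat (of_int m / of_nat n) * x, y)) - frag_cmul m (frag_of (x, y))" "n \<noteq> 0"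
    | (4) m n x y where "r = frag_cmul (int n) (frag_of (x, of_rat (of_int m / of_nat n) * y)) - frag_cmul m (frag_of (x, y))" "n \<noteq> 0"
    | (5) x where "r = frag_of (x, x)"
    unfolding wedge_rels_def by blast
  then show ?thesis
  proof cases
    case 1 then show ?thesis by (simp add: additive.diff[OF Psi_additive] Psi_of WW1)
  next
    case 2 then show ?thesis by (simp add: additive.diff[OF Psi_additive] Psi_of WW2)
  next
    case 3
    have A: "addf (\<lambda>x. WW x y)" using WW by blast
    have q: "of_int (int n) * (of_rat (of_int m / of_nat n) * x) = of_int m * x"
      using 3(2) by (simp add: of_rat_divide)
    have "Psi r = zm (int n) (WW (of_rat (of_int m / of_nat n) * x) y) - zm m (WW x y)"
      unfolding 3(1) by (simp add: additive.diff[OF Psi_additive] Psi_cmul Psi_of)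
    also have "zm (int n) (WW (of_rat (of_int m / of_nat n) * x) y) = WW (of_int (int n) * (of_rat (of_int m / of_nat n) * x)) y"
      using addf_int[OF A, of "int n" "of_rat (of_int m / of_nat n) * x"] by simp
    also have "\<dots> = WW (of_int m * x) y" unfolding q ..
    also have "\<dots> = zm m (WW x y)" using addf_int[OF A] by simp
    finally show ?thesis by simp
  next
    case 4
    have A: "addf (WW x)" using WW by blast
    have q: "of_int (int n) * (of_rat (of_int m / of_nat n) * y) = of_int m * y"
      using 4(2) by (simp add: of_rat_divide)
    have "Psi r = zm (int n) (WW x (of_rat (of_int m / of_nat n) * y)) - zm m (WW x y)"
      unfolding 4(1) by (simp add: additive.diff[OF Psi_additive] Psi_cmul Psi_of)
    also have "zm (int n) (WW x (of_rat (of_int m / of_nat n) * y)) = WW x (of_int (int n) * (of_rat (of_int m / of_nat n) * y))"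
      using addf_int[OF A, of "int n" "of_rat (of_int m / of_nat n) * y"] by simp
    also have "\<dots> = WW x (of_int m * y)" unfolding q ..
    also have "\<dots> = zm m (WW x y)" using addf_int[OF A] by simp
    finally show ?thesis by simp
  next
    case 5 then show ?thesis by (simp add: Psi_of WW_alt)
  qed
qed

lemma HW_Psi: "z \<in> HW \<Longrightarrow> Psi z = 0"
  unfolding HW_def
proof (induct z rule: generate.induct)
  case one then show ?case using additive.zero[OF Psi_additive] by simp
next
  case (incl h) then show ?case by (rule Psi_rel)
next
  case (inv h)
  have "inv\<^bsub>free_Abelian_group UNIV\<^esub> h = - h" by simp
  then show ?case using Psi_rel[OF inv] additive.minus[OF Psi_additive] by simp
next
  case (eng h1 h2) then show ?case by (simp add: Psi_add)
qed

lemma Psi_pV: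
  assumes "Poly_Mapping.keys z \<subseteq> V_gens"
  shows "Psi z = pV z"
  using assms
proof (rule free_Abelian_group_induct[where P = "\<lambda>z. Psi z = pV z"])
  show "Psi 0 = pV 0" by (simp add: additive.zero[OF Psi_additive] pV_zero)
next
  fix x y :: "real \<times> real \<Rightarrow>\<^sub>0 int"
  assume "Poly_Mapping.keys x \<subseteq> V_gens" "Poly_Mapping.keys y \<subseteq> V_gens" "Psi x = pV x" "Psi y = pV y"
  then show "Psi (x - y) = pV (x - y)" by (simp add: additive.diff[OF Psi_additive] pV_diff)
next
  fix a :: "real \<times> real"
  assume "a \<in> V_gens"
  moreover obtain a1 a2 where a: "a = (a1, a2)" by fastforce
  ultimately show "Psi (frag_of a) = pV (frag_of a)" by (simp add: Psi_of WW_u uV_def V_gens_def)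
qed

lemma key_inj: "Poly_Mapping.keys z \<subseteq> V_gens \<Longrightarrow> z \<in> HW \<Longrightarrow> z \<in> HV"
  using Psi_pV HW_Psi pV_zero_iff by metis



definition Phi :: "vt \<Rightarrow> wt" where
  "Phi v = pW (SOME z. Poly_Mapping.keys z \<subseteq> V_gens \<and> v = pV z)"

lemma Phi_pV:
  assumes z: "Poly_Mapping.keys z \<subseteq> V_gens"
  shows "Phi (pV z) = pW z"
proof -
  define z' where "z' = (SOME z'. Poly_Mapping.keys z' \<subseteq> V_gens \<and> pV z = pV z')"
  have z': "Poly_Mapping.keys z' \<subseteq> V_gens \<and> pV z = pV z'"
    unfolding z'_def by (rule someI_ex) (use z in blast)
  then have "pV (z - z') = 0" using z by (simp add: pV_diff)
  then have "z - z' \<in> HV" using z z' by (simp add: pV_zero_iff keys_closed)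
  then have "pW (z - z') = 0" by (rule HV_pW)
  then have "pW z = pW z'" by (simp add: additive.diff[OF pW_additive])
  then show ?thesis unfolding Phi_def z'_def[symmetric] by simp
qed

lemma Phi_add: "Phi (v + v') = Phi v + Phi v'"
proof -
  obtain z where z: "Poly_Mapping.keys z \<subseteq> V_gens" "v = pV z" using pV_surj by blast
  obtain z' where z': "Poly_Mapping.keys z' \<subseteq> V_gens" "v' = pV z'" using pV_surj by blast
  have "v + v' = pV (z + z')" using z z' by (simp add: pV_add)
  then show ?thesis using z z' by (simp add: Phi_pV keys_closed pW_add)
qed

lemma Phi_additive: "additive Phi"
  by unfold_locales (rule Phi_add)

lemma Phi_inj: "Phi v = Phi v' \<Longrightarrow> v = v'"
proof -
  assume e: "Phi v = Phi v'"
  obtain z where z: "Poly_Mapping.keys z \<subseteq> V_gens" "v - v' = pV z" using pV_surj by blast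
  have "Phi (v - v') = 0" using e by (simp add: additive.diff[OF Phi_additive])
  then have "pW z = 0" using z Phi_pV by simp
  then have "z \<in> HW" by (simp add: pW_zero_iff)
  then have "z \<in> HV" using z key_inj by blast
  then have "v - v' = 0" using z pV_zero_iff by simp
  then show "v = v'" by simp
qed

lemma Phi_WW: "Phi (WW x y) = wd x y"
proof -
  have "Phi (WW x y) - wd x y = 0"
  proof (rule biadd_zero[where B = "\<lambda>x y. Phi (WW x y) - wd x y"])
    show "addf (\<lambda>x. Phi (WW x y) - wd x y)" for y
      unfolding addf_def by (simp add: WW1 wd_add1 Phi_add algebra_simps)
    show "addf (\<lambda>y. Phi (WW x y) - wd x y)" for x
      unfolding addf_def by (simp add: WW2 wd_add2 Phi_add algebra_simps)
    fix a b :: real assume "0 < b" "b < a" "a < 1"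
    then show "Phi (WW a b) - wd a b = 0"
      by (simp add: WW_u uV_def Phi_pV wd_def V_gens_def)
  qed
  then show ?thesis by simp
qed

lemma Phi_Psi: "Phi (Psi y) = pW y"
proof -
  have "Poly_Mapping.keys y \<subseteq> (UNIV :: (real \<times> real) set)" by simp
  then show ?thesis
  proof (rule free_Abelian_group_induct[where P = "\<lambda>y. Phi (Psi y) = pW y"])
    show "Phi (Psi 0) = pW 0"
      by (simp add: additive.zero[OF Psi_additive] additive.zero[OF Phi_additive] additive.zero[OF pW_additive])
  next
    fix x y :: "real \<times> real \<Rightarrow>\<^sub>0 int"
    assume "Phi (Psi x) = pW x" "Phi (Psi y) = pW y"
    then show "Phi (Psi (x - y)) = pW (x - y)"
      by (simp add: additive.diff[OF Psi_additive] additive.diff[OF Phi_additive] additive.diff[OF pW_additive])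
  next
    fix a :: "real \<times> real"
    obtain a1 a2 where a: "a = (a1, a2)" by fastforce
    then show "Phi (Psi (frag_of a)) = pW (frag_of a)" by (simp add: Psi_of Phi_WW wd_def)
  qed
qed

lemma Phi_surj: "\<exists>v. Phi v = w"
proof -
  obtain y where "w = pW y" using pW_surj by blast
  then show ?thesis using Phi_Psi by blast
qed

theorem lemma9p1:
  shows "\<exists>h. h \<in> iso V_group Wedge2_QR \<and>
             (\<forall>a b. 0 < b \<and> b < a \<and> a \<le> 1 \<longrightarrow> h (u_gen a b) = wedge a b)"
proof (intro exI conjI allI impI)
  define h where "h X = Rw (Phi (Av X))" for X
  interpret GV: comm_group V_group by (rule V_comm)
  interpret GW: comm_group Wedge2_QR by (rule W_comm)
  have AvM: "Av (X \<otimes>\<^bsub>V_group\<^esub> Y) = Av X + Av Y" if "X \<in> carrier V_group" "Y \<in> carrier V_group" for X Y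
    unfolding plus_vt_def using that by (simp add: Av_inverse)
  have RwM: "Rw (a + b) = Rw a \<otimes>\<^bsub>Wedge2_QR\<^esub> Rw b" for a b
    unfolding plus_wt_def using Rw[of a] Rw[of b] by (simp add: Aw_inverse)
  show "h \<in> iso V_group Wedge2_QR"
    unfolding iso_def
  proof (intro CollectI conjI)
    show "h \<in> hom V_group Wedge2_QR"
    proof (rule homI)
      fix X assume "X \<in> carrier V_group"
      show "h X \<in> carrier Wedge2_QR" unfolding h_def using Rw by blast
    next
      fix X Y assume "X \<in> carrier V_group" "Y \<in> carrier V_group"
      then show "h (X \<otimes>\<^bsub>V_group\<^esub> Y) = h X \<otimes>\<^bsub>Wedge2_QR\<^esub> h Y"
        unfolding h_def by (simp add: AvM Phi_add RwM)
    qed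
    show "bij_betw h (carrier V_group) (carrier Wedge2_QR)"
      unfolding bij_betw_def
    proof
      show "inj_on h (carrier V_group)"
      proof (rule inj_onI)
        fix X Y assume XY: "X \<in> carrier V_group" "Y \<in> carrier V_group" "h X = h Y"
        then have "Phi (Av X) = Phi (Av Y)" unfolding h_def by (simp add: Rw_inject)
        then have "Av X = Av Y" by (rule Phi_inj)
        then show "X = Y" using XY by (simp add: Av_inject)
      qed
      show "h ` carrier V_group = carrier Wedge2_QR"
      proof
        show "h ` carrier V_group \<subseteq> carrier Wedge2_QR" unfolding h_def using Rw by blast
        show "carrier Wedge2_QR \<subseteq> h ` carrier V_group"
        proof
          fix Y assume Y: "Y \<in> carrier Wedge2_QR"
          obtain v where v: "Phi v = Aw Y" using Phi_surj by blast
          have "h (Rv v) = Y" unfolding h_def using v Y by (simp add: Rv_inverse Aw_inverse)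
          moreover have "Rv v \<in> carrier V_group" using Rv by blast
          ultimately show "Y \<in> h ` carrier V_group" by blast
        qed
      qed
    qed
  qed
  fix a b :: real
  assume ab: "0 < b \<and> b < a \<and> a \<le> 1"
  then have k: "Poly_Mapping.keys (frag_of (a, b)) \<subseteq> V_gens" by (simp add: V_gens_def)
  have "h (u_gen a b) = Rw (Phi (pV (frag_of (a, b))))"
    unfolding h_def u_gen_def pV_def ..
  also have "\<dots> = Rw (pW (frag_of (a, b)))" using k by (simp add: Phi_pV)
  also have "\<dots> = wedge a b" unfolding pW_def wedge_def using pW_in by (simp add: Aw_inverse)
  finally show "h (u_gen a b) = wedge a b" .
qed


end
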